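(* Assume $\beta>0$ and $\zeta_l+\zeta_r>0$. Then every eigenvalue of the linear map $l$ on $M_N(\mathbb{C})$ has strictly negative real part. In particular $l$ is invertible and $\lim_{t\to\infty}e^{tl}=0$.
   Context: Fix an integer $N\ge 2$ and a bounded function $v:\mathbb{N}=\{1,2,\dots\}\to\mathbb{R}$. Let $e_1,\dots,e_N$ be the standard basis of $\mathbb{C}^N$ and $p_n=|e_n\rangle\langle e_n|$. Let $h$ be the Hermitian $N\times N$ matrix $(h\psi)(n)=-\psi(n+1)-\psi(n-1)+v(n)\psi(n)$, $n=1,\dots,N$, with the convention $\psi(0)=\psi(N+1)=0$. Let $\alpha_{in}^l,\alpha_{out}^l,\alpha_{in}^r,\alpha_{out}^r,\beta\ge 0$ be real numbers and put $\zeta_l=\alpha_{in}^l+\alpha_{out}^l$, $\zeta_r=\alpha_{in}^r+\alpha_{out}^r$. Define the linear map $l:M_N(\mathbb{C})\to M_N(\mathbb{C})$ by $l(a)=-i[h,a]-\{\zeta_l p_1+\zeta_r p_N,a\}+\beta\left(\sum_{n=1}^N p_nap_n-a\right)$, where $[x,y]=xy-yx$ and $\{x,y\}=xy+yx$. *)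

theory Defs
  imports "HOL-Analysis.Analysis"
begin

text \<open>N x N complex matrices are modelled as complex^'n^'n with N = CARD('n).
  The basis vectors e_1..e_N are enumerated through a bijection idx : 'n -> {1..N}.\<close>

definition cscale :: "complex \<Rightarrow> complex^'n^'n \<Rightarrow> complex^'n^'n" where
  "cscale c a = (\<chi> i j. c * a $ i $ j)"

definition proj :: "('n \<Rightarrow> nat) \<Rightarrow> nat \<Rightarrow> complex^'n^'n" where
  "proj idx n = (\<chi> i j. if i = j \<and> idx i = n then 1 else 0)"

text \<open>(h psi)(n) = - psi(n+1) - psi(n-1) + v(n) psi(n), Dirichlet boundary conditions\<close>
definition hmat :: "('n \<Rightarrow> nat) \<Rightarrow> (nat \<Rightarrow> real) \<Rightarrow> complex^'n^'n" where
  "hmat idx v = (\<chi> i j. (if i = j then complex_of_real (v (idx i)) else 0)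
                        - (if idx j = idx i + 1 \<or> idx i = idx j + 1 then 1 else 0))"

definition lmap :: "('n::finite \<Rightarrow> nat) \<Rightarrow> (nat \<Rightarrow> real) \<Rightarrow> real \<Rightarrow> real \<Rightarrow> real
                     \<Rightarrow> complex^'n^'n \<Rightarrow> complex^'n^'n" where
  "lmap idx v zl zr \<beta> a =
     cscale (- \<i>) (hmat idx v ** a - a ** hmat idx v)
     - (let P = cscale (complex_of_real zl) (proj idx 1)
              + cscale (complex_of_real zr) (proj idx CARD('n))
        in P ** a + a ** P)
     + cscale (complex_of_real \<beta>) ((\<Sum>n\<in>{1..CARD('n)}. proj idx n ** a ** proj idx n) - a)"

definition is_eigenvalue :: "(complex^'n^'n \<Rightarrow> complex^'n^'n) \<Rightarrow> complex \<Rightarrow> bool" where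
  "is_eigenvalue f c \<longleftrightarrow> (\<exists>a. a \<noteq> 0 \<and> f a = cscale c a)"

definition op_exp :: "real \<Rightarrow> ('a::real_normed_vector \<Rightarrow> 'a) \<Rightarrow> 'a \<Rightarrow>\<^sub>L 'a" where
  "op_exp t f = (\<Sum>k. (t ^ k / fact k) *\<^sub>R (((\<lambda>A. A o\<^sub>L Blinfun f) ^^ k) id_blinfun))"

end

theory Submission
  imports Defs
begin


typedef (overloaded) 'a bop = "UNIV :: ('a::euclidean_space \<Rightarrow>\<^sub>L 'a) set"
  morphisms Rop Aop by simp

setup_lifting type_definition_bop

instantiation bop :: (euclidean_space) real_normed_algebra_1
begin
lift_definition norm_bop :: "'a bop \<Rightarrow> real" is norm .
lift_definition minus_bop :: "'a bop \<Rightarrow> 'a bop \<Rightarrow> 'a bop" is "(-)" .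
lift_definition plus_bop :: "'a bop \<Rightarrow> 'a bop \<Rightarrow> 'a bop" is "(+)" .
lift_definition uminus_bop :: "'a bop \<Rightarrow> 'a bop" is "uminus" .
lift_definition zero_bop :: "'a bop" is "0" .
lift_definition one_bop :: "'a bop" is "id_blinfun" .
lift_definition times_bop :: "'a bop \<Rightarrow> 'a bop \<Rightarrow> 'a bop" is "(o\<^sub>L)" .
lift_definition scaleR_bop :: "real \<Rightarrow> 'a bop \<Rightarrow> 'a bop" is "scaleR" .
definition dist_bop :: "'a bop \<Rightarrow> 'a bop \<Rightarrow> real" where "dist_bop a b = norm (a - b)"
definition uniformity_bop :: "('a bop \<times> 'a bop) filter" where
  "uniformity_bop = (INF e\<in>{0 <..}. principal {(x, y). dist x y < e})"
definition open_bop :: "'a bop set \<Rightarrow> bool"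
  where "open_bop S = (\<forall>x\<in>S. \<forall>\<^sub>F (x', y) in uniformity. x' = x \<longrightarrow> y \<in> S)"
definition sgn_bop :: "'a bop \<Rightarrow> 'a bop" where "sgn_bop x = scaleR (inverse (norm x)) x"
instance
proof
  fix a b c :: "'a bop" and r s :: real
  show "a * b * c = a * (b * c)" by transfer (auto intro: blinfun_eqI)
  show "(a + b) * c = a * c + b * c" by transfer (simp add: blinfun.bilinear_simps bounded_bilinear.add_left[OF bounded_bilinear_blinfun_compose])
  show "a * (b + c) = a * b + a * c" by transfer (simp add: bounded_bilinear.add_right[OF bounded_bilinear_blinfun_compose])
  show "1 * a = a" by transfer (auto intro: blinfun_eqI)
  show "a * 1 = a" by transfer (auto intro: blinfun_eqI)
  show "(0::'a bop) \<noteq> 1" apply transfer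
    by (metis blinfun_apply_id_blinfun norm_blinfun_id norm_zero zero_neq_one)
  show "scaleR r a * b = scaleR r (a * b)" by transfer (simp add: bounded_bilinear.scaleR_left[OF bounded_bilinear_blinfun_compose])
  show "a * scaleR r b = scaleR r (a * b)" by transfer (simp add: bounded_bilinear.scaleR_right[OF bounded_bilinear_blinfun_compose])
  show "norm (a * b) \<le> norm a * norm b" by transfer (rule norm_blinfun_compose)
  show "norm (1::'a bop) = 1" by transfer simp
  show "a + b + c = a + (b + c)" by transfer simp
  show "a + b = b + a" by transfer simp
  show "0 + a = a" by transfer simp
  show "- a + a = 0" by transfer simp
  show "a - b = a + - b" by transfer simp
  show "r *\<^sub>R (a + b) = r *\<^sub>R a + r *\<^sub>R b" by transfer (simp add: scaleR_right_distrib)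
  show "(r + s) *\<^sub>R a = r *\<^sub>R a + s *\<^sub>R a" by transfer (simp add: scaleR_left_distrib)
  show "r *\<^sub>R s *\<^sub>R a = (r * s) *\<^sub>R a" by transfer simp
  show "1 *\<^sub>R a = a" by transfer simp
  show "dist a b = norm (a - b)" by (simp add: dist_bop_def)
  show "sgn a = inverse (norm a) *\<^sub>R a" by (simp add: sgn_bop_def)
  show "(uniformity :: ('a bop \<times> 'a bop) filter) = (INF e\<in>{0 <..}. principal {(x, y). dist x y < e})"
    by (simp add: uniformity_bop_def)
  show "open (U :: 'a bop set) = (\<forall>x\<in>U. \<forall>\<^sub>F (x', y) in uniformity. x' = x \<longrightarrow> y \<in> U)" for U
    by (simp add: open_bop_def)
  show "(norm a = 0) = (a = 0)" by transfer simp
  show "norm (a + b) \<le> norm a + norm b" by transfer (rule norm_triangle_ineq)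
  show "norm (r *\<^sub>R a) = \<bar>r\<bar> * norm a" by transfer simp
qed
end

instance bop :: (euclidean_space) banach
proof
  fix X :: "nat \<Rightarrow> 'a bop"
  assume C: "Cauchy X"
  have nr: "norm (x - y) = norm (Rop x - Rop y)" for x y :: "'a bop" by transfer simp
  have "Cauchy (\<lambda>n. Rop (X n))" using C unfolding Cauchy_def dist_norm nr by simp
  then obtain L where L: "(\<lambda>n. Rop (X n)) \<longlonglongrightarrow> L" using convergent_def complete_UNIV convergent_eq_Cauchy by blast
  have "X \<longlonglongrightarrow> Aop L" using L unfolding tendsto_iff dist_norm nr by (simp add: Aop_inverse)
  then show "convergent X" unfolding convergent_def by blast
qed


lemma bounded_linear_Rop: "bounded_linear Rop"
proof
  fix a b :: "'a::euclidean_space bop" and r :: real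
  show "Rop (a + b) = Rop a + Rop b" by transfer simp
  show "Rop (r *\<^sub>R a) = r *\<^sub>R Rop a" by transfer simp
  show "\<exists>K. \<forall>x::'a bop. norm (Rop x) \<le> norm x * K" by (rule exI[of _ 1]) (transfer, simp)
qed

lemma Rop_mult: "Rop (a * b) = Rop a o\<^sub>L Rop b" by transfer simp
lemma Rop_scaleR: "Rop (r *\<^sub>R a) = r *\<^sub>R Rop a" by transfer simp
lemma Rop_one: "Rop 1 = id_blinfun" by transfer simp
lemma norm_Rop: "norm (Rop a) = norm a" by transfer simp

lemma Rop_power: "Rop (Aop B ^ k) = ((\<lambda>A. A o\<^sub>L B) ^^ k) id_blinfun"
proof (induction k)
  case (Suc k)
  have "Aop B ^ Suc k = Aop B ^ k * Aop B" by (rule power_Suc2)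
  then show ?case using Suc by (simp add: Rop_mult Aop_inverse)
qed (simp add: Rop_one)

lemma op_exp_eq:
  fixes f :: "'a::euclidean_space \<Rightarrow> 'a"
  shows "op_exp t f = Rop (exp (t *\<^sub>R Aop (Blinfun f)))"
proof -
  have "Rop (exp (t *\<^sub>R Aop (Blinfun f))) = Rop (\<Sum>n. (t *\<^sub>R Aop (Blinfun f)) ^ n /\<^sub>R fact n)"
    by (simp add: exp_def)
  also have "\<dots> = (\<Sum>n. Rop ((t *\<^sub>R Aop (Blinfun f)) ^ n /\<^sub>R fact n))"
    by (rule bounded_linear.suminf[OF bounded_linear_Rop]) (rule summable_exp_generic)
  also have "\<dots> = op_exp t f"
    unfolding op_exp_def
    by (simp add: Rop_scaleR Rop_power divide_inverse mult.commute)
  finally show ?thesis ..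
qed




definition wt :: "('n::finite \<Rightarrow> nat) \<Rightarrow> real \<Rightarrow> real \<Rightarrow> 'n \<Rightarrow> real" where
  "wt idx zl zr i = (if idx i = 1 then zl else 0) + (if idx i = CARD('n) then zr else 0)"

lemma if0_mult: "(if b then x else 0) * (y::'a::semiring_0) = (if b then x * y else 0)" by simp
lemma mult_if0: "(y::'a::semiring_0) * (if b then x else 0) = (if b then y * x else 0)" by simp
lemma if_conj0: "(if k = j \<and> P then x else 0) = (if k = j then (if P then x else 0) else (0::'a::zero))" by simp

lemma proj_left: "(proj idx n ** a) $ i $ j = (if idx i = n then a $ i $ j else 0)"
  by (simp add: matrix_matrix_mult_def proj_def if_distrib[of "\<lambda>x. x * _"] cong: if_cong)

lemma proj_right: "(a ** proj idx n) $ i $ j = (if idx j = n then a $ i $ j else 0)"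
proof -
  have "(a ** proj idx n) $ i $ j = (\<Sum>k\<in>UNIV. if k = j then (if idx j = n then a $ i $ j else 0) else 0)"
    unfolding matrix_matrix_mult_def proj_def by (simp add: mult_if0 if_conj0 cong: if_cong)
  then show ?thesis by simp
qed

lemma diag_left:
  assumes "\<And>i k. P $ i $ k = (if i = k then d i else 0)"
  shows "(P ** a) $ i $ j = d i * a $ i $ j"
proof -
  have "(P ** a) $ i $ j = (\<Sum>k\<in>UNIV. if k = i then d i * a $ i $ j else 0)"
    unfolding matrix_matrix_mult_def using assms by (simp add: mult_if0 if0_mult cong: if_cong)
  then show ?thesis by simp
qed

lemma diag_right:
  assumes "\<And>i k. P $ i $ k = (if i = k then d i else 0)"
  shows "(a ** P) $ i $ j = a $ i $ j * d j"
proof -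
  have "(a ** P) $ i $ j = (\<Sum>k\<in>UNIV. if k = j then a $ i $ j * d j else 0)"
    unfolding matrix_matrix_mult_def using assms by (simp add: mult_if0 if0_mult cong: if_cong)
  then show ?thesis by simp
qed

lemma cscale_entry[simp]: "cscale c a $ i $ j = c * a $ i $ j"
  by (simp add: cscale_def)

lemma lmap_entry:
  fixes idx :: "'n::finite \<Rightarrow> nat"
  assumes idx: "bij_betw idx UNIV {1..CARD('n)}"
  shows "lmap idx v zl zr \<beta> a $ i $ j =
   - \<i> * ((\<Sum>k\<in>UNIV. hmat idx v $ i $ k * a $ k $ j) - (\<Sum>k\<in>UNIV. a $ i $ k * hmat idx v $ k $ j))
   - complex_of_real (wt idx zl zr i + wt idx zl zr j) * a $ i $ j
   + complex_of_real \<beta> * ((if i = j then a $ i $ j else 0) - a $ i $ j)"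
proof -
  have inj: "inj idx" and rng: "idx i \<in> {1..CARD('n)}" for i
    using idx by (auto simp: bij_betw_def)
  have S: "(\<Sum>n\<in>{1..CARD('n)}. proj idx n ** a ** proj idx n) $ i $ j = (if i = j then a $ i $ j else 0)"
  proof -
    have "(\<Sum>n\<in>{1..CARD('n)}. proj idx n ** a ** proj idx n) $ i $ j
        = (\<Sum>n\<in>{1..CARD('n)}. if n = idx i then (if idx j = idx i then a $ i $ j else 0) else 0)"
      unfolding sum_component by (intro sum.cong) (auto simp: proj_left proj_right)
    also have "\<dots> = (if idx j = idx i then a $ i $ j else 0)"
      using rng[of i] by (simp add: sum.delta')
    also have "\<dots> = (if i = j then a $ i $ j else 0)"
      using inj by (auto dest: injD)
    finally show ?thesis .
  qed
  have P: "(let P = cscale (complex_of_real zl) (proj idx 1) + cscale (complex_of_real zr) (proj idx CARD('n))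
        in P ** a + a ** P) $ i $ j = complex_of_real (wt idx zl zr i + wt idx zl zr j) * a $ i $ j"
  proof -
    let ?P = "cscale (complex_of_real zl) (proj idx 1) + cscale (complex_of_real zr) (proj idx CARD('n))"
    have D: "?P $ i $ k = (if i = k then complex_of_real (wt idx zl zr i) else 0)" for i k
      by (simp add: proj_def wt_def)
    show ?thesis unfolding Let_def vector_add_component diag_left[OF D] diag_right[OF D]
      by (simp add: algebra_simps)
  qed
  show ?thesis
    unfolding lmap_def vector_add_component vector_minus_component cscale_entry S P
    by (simp add: matrix_matrix_mult_def)
qed


lemma lmap_add:
  fixes idx :: "'n::finite \<Rightarrow> nat"
  assumes idx: "bij_betw idx UNIV {1..CARD('n)}"
  shows "lmap idx v zl zr \<beta> (a + b) = lmap idx v zl zr \<beta> a + lmap idx v zl zr \<beta> b"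
  unfolding vec_eq_iff
  by (simp add: lmap_entry[OF idx] sum.distrib algebra_simps)

lemma lmap_scaleR:
  fixes idx :: "'n::finite \<Rightarrow> nat"
  assumes idx: "bij_betw idx UNIV {1..CARD('n)}"
  shows "lmap idx v zl zr \<beta> (r *\<^sub>R a) = r *\<^sub>R lmap idx v zl zr \<beta> a"
proof -
  have sc: "\<And>z::complex. r *\<^sub>R z = complex_of_real r * z" by (simp add: scaleR_conv_of_real)
  show ?thesis
  unfolding vec_eq_iff
  by (simp add: lmap_entry[OF idx] sc sum_distrib_left algebra_simps)
qed

lemma lmap_linear:
  fixes idx :: "'n::finite \<Rightarrow> nat"
  assumes idx: "bij_betw idx UNIV {1..CARD('n)}"
  shows "linear (lmap idx v zl zr \<beta>)"
  by (rule linearI) (simp_all add: lmap_add[OF idx] lmap_scaleR[OF idx])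

lemma lmap_bounded_linear:
  fixes idx :: "'n::finite \<Rightarrow> nat"
  assumes idx: "bij_betw idx UNIV {1..CARD('n)}"
  shows "bounded_linear (lmap idx v zl zr \<beta>)"
  using lmap_linear[OF idx] linear_conv_bounded_linear by blast

lemma hmat_real: "cnj (hmat idx v $ i $ k) = hmat idx v $ i $ k"
  by (simp add: hmat_def)

lemma hmat_sym: "hmat idx v $ i $ k = hmat idx v $ k $ i"
  by (auto simp: hmat_def)





definition Qf :: "('n::finite \<Rightarrow> nat) \<Rightarrow> real \<Rightarrow> real \<Rightarrow> real \<Rightarrow> complex^'n^'n \<Rightarrow> real" where
  "Qf idx zl zr \<beta> a = (\<Sum>i\<in>UNIV. \<Sum>j\<in>UNIV.
      (wt idx zl zr i + wt idx zl zr j + (if i = j then 0 else \<beta>)) * (cmod (a$i$j))\<^sup>2)"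

lemma inner_cplx: "inner (x::complex) y = Re (cnj x * y)"
  by (simp add: inner_complex_def)

lemma inner_mat: "inner (a::complex^'n::finite^'n) b = (\<Sum>i\<in>UNIV. \<Sum>j\<in>UNIV. Re (cnj (a$i$j) * b$i$j))"
  by (simp add: inner_vec_def inner_cplx)

lemma Im_herm_sum:
  fixes F :: "'a \<Rightarrow> 'a \<Rightarrow> complex"
  assumes "finite A" "\<And>i k. cnj (F i k) = F k i"
  shows "Im (\<Sum>i\<in>A. \<Sum>k\<in>A. F i k) = 0"
proof -
  have "cnj (\<Sum>i\<in>A. \<Sum>k\<in>A. F i k) = (\<Sum>i\<in>A. \<Sum>k\<in>A. F k i)"
    by (simp add: assms(2))
  also have "\<dots> = (\<Sum>i\<in>A. \<Sum>k\<in>A. F i k)" by (rule sum.swap)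
  finally have "cnj (\<Sum>i\<in>A. \<Sum>k\<in>A. F i k) = (\<Sum>i\<in>A. \<Sum>k\<in>A. F i k)" .
  then have "Im (cnj (\<Sum>i\<in>A. \<Sum>k\<in>A. F i k)) = Im (\<Sum>i\<in>A. \<Sum>k\<in>A. F i k)" by simp
  then show ?thesis by (simp add: sum_negf)
qed




lemma comm_part_zero:
  fixes a :: "complex^'n::finite^'n"
  shows "(\<Sum>i\<in>UNIV. \<Sum>j\<in>UNIV. Re (cnj (a$i$j) * (- \<i> * ((\<Sum>k\<in>UNIV. hmat idx v $ i $ k * a $ k $ j)
      - (\<Sum>k\<in>UNIV. a $ i $ k * hmat idx v $ k $ j))))) = 0"
proof -
  let ?h = "\<lambda>i k. hmat idx v $ i $ k"
  define S1 where "S1 = (\<Sum>i\<in>UNIV. \<Sum>j\<in>UNIV. cnj (a$i$j) * (\<Sum>k\<in>UNIV. ?h i k * a $ k $ j))"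
  define S2 where "S2 = (\<Sum>i\<in>UNIV. \<Sum>j\<in>UNIV. cnj (a$i$j) * (\<Sum>k\<in>UNIV. a $ i $ k * ?h k j))"
  have e1: "S1 = (\<Sum>i\<in>UNIV. \<Sum>k\<in>UNIV. (\<Sum>j\<in>UNIV. cnj (a$i$j) * a$k$j) * ?h i k)"
    unfolding S1_def sum_distrib_left sum_distrib_right
    apply (rule sum.cong[OF refl])
    apply (rule trans[OF sum.swap])
    apply (rule sum.cong[OF refl])
    by (simp only: ac_simps)
  have e2: "S2 = (\<Sum>j\<in>UNIV. \<Sum>k\<in>UNIV. (\<Sum>i\<in>UNIV. cnj (a$i$j) * a$i$k) * ?h k j)"
    unfolding S2_def sum_distrib_left sum_distrib_right
    apply (rule trans[OF sum.swap])
    apply (rule sum.cong[OF refl])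
    apply (rule trans[OF sum.swap])
    apply (rule sum.cong[OF refl])
    by (simp only: ac_simps)
  have i1: "Im S1 = 0" unfolding e1
    by (rule Im_herm_sum) (auto simp: hmat_real hmat_sym[of idx v] mult.commute)
  have i2: "Im S2 = 0" unfolding e2
    by (rule Im_herm_sum) (auto simp: hmat_real hmat_sym[of idx v] mult.commute)
  have "(\<Sum>i\<in>UNIV. \<Sum>j\<in>UNIV. Re (cnj (a$i$j) * (- \<i> * ((\<Sum>k\<in>UNIV. ?h i k * a $ k $ j)
      - (\<Sum>k\<in>UNIV. a $ i $ k * ?h k j)))))
     = Re (\<Sum>i\<in>UNIV. \<Sum>j\<in>UNIV. (- \<i>) * (cnj (a$i$j) * (\<Sum>k\<in>UNIV. ?h i k * a $ k $ j))
       - (- \<i>) * (cnj (a$i$j) * (\<Sum>k\<in>UNIV. a $ i $ k * ?h k j)))"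
    unfolding Re_sum[symmetric] by (intro arg_cong[where f=Re] sum.cong refl) (simp add: right_diff_distrib)
  also have "\<dots> = Re ((- \<i>) * S1 - (- \<i>) * S2)"
    unfolding S1_def S2_def sum_subtractf sum_distrib_left ..
  also have "\<dots> = 0" using i1 i2 by simp
  finally show ?thesis .
qed


lemma re_cnj_scal: "Re (cnj x * (complex_of_real r * x)) = r * (cmod x)\<^sup>2"
proof -
  have "(cmod x)\<^sup>2 = Re x * Re x + Im x * Im x" by (metis cmod_power2 power2_eq_square)
  then show ?thesis by (simp add: algebra_simps)
qed

lemma entry_re:
  "Re (cnj x * (T - complex_of_real w * x + complex_of_real \<beta> * ((if b then x else 0) - x)))
     = Re (cnj x * T) - (w + (if b then 0 else \<beta>)) * (cmod x)\<^sup>2"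
proof -
  have "cnj x * (T - complex_of_real w * x + complex_of_real \<beta> * ((if b then x else 0) - x))
     = cnj x * T - cnj x * (complex_of_real (w + (if b then 0 else \<beta>)) * x)"
    by (cases b) (simp_all add: algebra_simps)
  then show ?thesis by (simp only: re_cnj_scal minus_complex.sel)
qed

lemma inner_lmap:
  fixes idx :: "'n::finite \<Rightarrow> nat"
  assumes idx: "bij_betw idx UNIV {1..CARD('n)}"
  shows "inner a (lmap idx v zl zr \<beta> a) = - Qf idx zl zr \<beta> a"
proof -
  have "inner a (lmap idx v zl zr \<beta> a) = (\<Sum>i\<in>UNIV. \<Sum>j\<in>UNIV.
      Re (cnj (a$i$j) * (- \<i> * ((\<Sum>k\<in>UNIV. hmat idx v $ i $ k * a $ k $ j)
      - (\<Sum>k\<in>UNIV. a $ i $ k * hmat idx v $ k $ j))))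
      - (wt idx zl zr i + wt idx zl zr j + (if i = j then 0 else \<beta>)) * (cmod (a$i$j))\<^sup>2)"
    unfolding inner_mat lmap_entry[OF idx] entry_re by (simp add: add.assoc)
  also have "\<dots> = - Qf idx zl zr \<beta> a"
    unfolding sum_subtractf comm_part_zero Qf_def by simp
  finally show ?thesis .
qed

lemma Qf_nonneg:
  assumes "zl \<ge> 0" "zr \<ge> 0" "\<beta> \<ge> 0"
  shows "Qf idx zl zr \<beta> a \<ge> 0"
  unfolding Qf_def using assms by (intro sum_nonneg mult_nonneg_nonneg) (auto simp: wt_def)




lemma Qf_zero:
  assumes "zl \<ge> 0" "zr \<ge> 0" "\<beta> > 0" "Qf idx zl zr \<beta> b = 0"
  shows "\<And>i j. i \<noteq> j \<Longrightarrow> b$i$j = 0" and "\<And>i. wt idx zl zr i > 0 \<Longrightarrow> b$i$i = 0"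
proof -
  have wnn: "wt idx zl zr i \<ge> 0" for i using assms by (auto simp: wt_def)
  have nn: "\<And>i j. (wt idx zl zr i + wt idx zl zr j + (if i = j then 0 else \<beta>)) * (cmod (b$i$j))\<^sup>2 \<ge> 0"
    using wnn assms by (intro mult_nonneg_nonneg) auto
  define F where "F i j = (wt idx zl zr i + wt idx zl zr j + (if i = j then 0 else \<beta>)) * (cmod (b$i$j))\<^sup>2" for i j
  have Fnn: "F i j \<ge> 0" for i j unfolding F_def by (rule nn)
  have all0: "F i j = 0" for i j
  proof -
    have "(\<Sum>i\<in>UNIV. \<Sum>j\<in>UNIV. F i j) = 0" using assms(4) unfolding Qf_def F_def .
    then have "\<forall>i\<in>UNIV. (\<Sum>j\<in>UNIV. F i j) = 0"
      using sum_nonneg_eq_0_iff[of UNIV "\<lambda>i. \<Sum>j\<in>UNIV. F i j"] Fnn by (simp add: sum_nonneg)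
    then have "(\<Sum>j\<in>UNIV. F i j) = 0" by simp
    then have "\<forall>j\<in>UNIV. F i j = 0"
      using sum_nonneg_eq_0_iff[of UNIV "\<lambda>j. F i j"] Fnn by simp
    then show ?thesis by simp
  qed
  have all: "(wt idx zl zr i + wt idx zl zr j + (if i = j then 0 else \<beta>)) * (cmod (b$i$j))\<^sup>2 = 0" for i j
    using all0[of i j] unfolding F_def .
  show "b$i$j = 0" if "i \<noteq> j" for i j
  proof -
    have "wt idx zl zr i + wt idx zl zr j + (if i = j then 0 else \<beta>) > 0"
      using that wnn[of i] wnn[of j] assms(3) by simp
    then show ?thesis using all[of i j] by simp
  qed
  show "b$i$i = 0" if "wt idx zl zr i > 0" for i
  proof -
    have "wt idx zl zr i + wt idx zl zr i + (if i = i then 0 else \<beta>) > 0"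
      using that by simp
    then show ?thesis using all[of i i] by simp
  qed
qed

lemma kernel_trivial:
  fixes idx :: "'n::finite \<Rightarrow> nat"
  assumes idx: "bij_betw idx UNIV {1..CARD('n)}"
    and pos: "zl \<ge> 0" "zr \<ge> 0" "\<beta> > 0" "zl + zr > 0"
    and Q1: "Qf idx zl zr \<beta> a = 0" and Q2: "Qf idx zl zr \<beta> (lmap idx v zl zr \<beta> a) = 0"
  shows "a = 0"
proof -
  have inj: "inj idx" and rng: "\<And>i. idx i \<in> {1..CARD('n)}" and img: "idx ` UNIV = {1..CARD('n)}"
    using idx by (auto simp: bij_betw_def)
  note off = Qf_zero(1)[OF pos(1-3) Q1]
  note dg = Qf_zero(2)[OF pos(1-3) Q1]
  note off2 = Qf_zero(1)[OF pos(1-3) Q2]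
  have adj: "a$j$j = a$i$i" if "idx j = idx i + 1" for i j
  proof -
    have ij: "i \<noteq> j" using that by auto
    have s1: "(\<Sum>k\<in>UNIV. hmat idx v $ i $ k * a $ k $ j) = (\<Sum>k\<in>UNIV. if k = j then hmat idx v $ i $ j * a $ j $ j else 0)"
      by (rule sum.cong) (auto simp: off)
    have s2: "(\<Sum>k\<in>UNIV. a $ i $ k * hmat idx v $ k $ j) = (\<Sum>k\<in>UNIV. if k = i then a $ i $ i * hmat idx v $ i $ j else 0)"
      by (rule sum.cong) (auto simp: off)
    have h: "hmat idx v $ i $ j = -1" using ij that by (simp add: hmat_def)
    have "lmap idx v zl zr \<beta> a $ i $ j = 0" using off2[OF ij] .
    then have "- \<i> * (- a $ j $ j + a $ i $ i) = 0"
      unfolding lmap_entry[OF idx] s1 s2 using ij h off[OF ij] by simp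
    then show ?thesis by simp
  qed
  define g where "g = inv_into UNIV idx"
  have ig: "idx (g m) = m" if "m \<in> {1..CARD('n)}" for m
    using that img unfolding g_def by (metis f_inv_into_f)
  have chain: "\<forall>m. 1 \<le> m \<and> m \<le> CARD('n) \<longrightarrow> a $ g m $ g m = a $ g 1 $ g 1"
  proof (intro allI)
    fix m show "1 \<le> m \<and> m \<le> CARD('n) \<longrightarrow> a $ g m $ g m = a $ g 1 $ g 1"
    proof (induction m)
      case (Suc m)
      show ?case
      proof (cases "m = 0")
        case False
        show ?thesis
        proof
          assume m: "1 \<le> Suc m \<and> Suc m \<le> CARD('n)"
          then have "idx (g (Suc m)) = idx (g m) + 1" using False by (simp add: ig)
          then have "a $ g (Suc m) $ g (Suc m) = a $ g m $ g m" by (rule adj)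
          then show "a $ g (Suc m) $ g (Suc m) = a $ g 1 $ g 1" using Suc m False by simp
        qed
      qed simp
    qed simp
  qed
  have alleq: "a $ i $ i = a $ g 1 $ g 1" for i
  proof -
    have "g (idx i) = i" unfolding g_def using inj by simp
    then show ?thesis using chain rng[of i] by (metis atLeastAtMost_iff)
  qed
  obtain i0 where i0: "wt idx zl zr i0 > 0"
  proof (cases "zl > 0")
    case True
    have "CARD('n) \<ge> 1" by (simp add: Suc_leI)
    then have "idx (g 1) = 1" by (intro ig) simp
    then have "wt idx zl zr (g 1) > 0" using True pos by (auto simp: wt_def)
    then show ?thesis by (rule that)
  next
    case False
    then have zr: "zr > 0" using pos by simp
    have "CARD('n) \<ge> 1" by (simp add: Suc_leI)
    then have "idx (g CARD('n)) = CARD('n)" by (intro ig) simp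
    then have "wt idx zl zr (g CARD('n)) > 0" using zr pos by (auto simp: wt_def)
    then show ?thesis by (rule that)
  qed
  have c0: "a $ g 1 $ g 1 = 0" using dg[OF i0] alleq[of i0] by simp
  show "a = 0"
    unfolding vec_eq_iff using off alleq c0 by (metis zero_index)
qed




lemma inner_cscale: "inner (a::complex^'n::finite^'n) (cscale c a) = Re c * inner a a"
proof -
  have e: "Re (cnj x * (c * x)) = Re c * Re (cnj x * x)" for x :: complex
  proof -
    have x2: "cnj x * x = complex_of_real ((cmod x)\<^sup>2)"
      using complex_norm_square[of x] by (simp add: mult.commute)
    have "cnj x * (c * x) = c * (cnj x * x)" by (simp add: ac_simps)
    then have x3: "cnj x * (c * x) = c * complex_of_real ((cmod x)\<^sup>2)" using x2 by simp
    show ?thesis unfolding x3 x2 by simp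
  qed
  show ?thesis unfolding inner_mat cscale_entry e sum_distrib_left by (rule refl)
qed

lemma Qf_cscale: "Qf idx zl zr \<beta> (cscale c a) = (cmod c)\<^sup>2 * Qf idx zl zr \<beta> a"
  unfolding Qf_def by (simp add: sum_distrib_left norm_mult power_mult_distrib algebra_simps)

lemma Qf_zero_mat[simp]: "Qf idx zl zr \<beta> 0 = 0"
  unfolding Qf_def by simp


lemma eig_neg:
  fixes idx :: "'n::finite \<Rightarrow> nat"
  assumes idx: "bij_betw idx UNIV {1..CARD('n)}"
    and pos: "zl \<ge> 0" "zr \<ge> 0" "\<beta> > 0" "zl + zr > 0"
    and ev: "is_eigenvalue (lmap idx v zl zr \<beta>) c"
  shows "Re c < 0"
proof (rule ccontr)
  assume nc: "\<not> Re c < 0"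
  obtain a where a0: "a \<noteq> 0" and la: "lmap idx v zl zr \<beta> a = cscale c a"
    using ev unfolding is_eigenvalue_def by blast
  have "Re c * inner a a = - Qf idx zl zr \<beta> a"
    using inner_lmap[OF idx, of a v zl zr \<beta>] la inner_cscale[of a c] by simp
  moreover have "inner a a > 0" using a0 by simp
  moreover have "Qf idx zl zr \<beta> a \<ge> 0" using pos by (intro Qf_nonneg) auto
  ultimately have q0: "Qf idx zl zr \<beta> a = 0" using nc
    by (metis add.inverse_neutral le_less_trans linorder_not_le mult_nonneg_nonneg neg_0_le_iff_le order_less_imp_le order.antisym)
  have q1: "Qf idx zl zr \<beta> (lmap idx v zl zr \<beta> a) = 0" unfolding la Qf_cscale q0 by simp
  have "a = 0" by (rule kernel_trivial[OF idx pos q0 q1])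
  with a0 show False by simp
qed

lemma L_inj:
  fixes idx :: "'n::finite \<Rightarrow> nat"
  assumes idx: "bij_betw idx UNIV {1..CARD('n)}"
    and pos: "zl \<ge> 0" "zr \<ge> 0" "\<beta> > 0" "zl + zr > 0"
  shows "inj (lmap idx v zl zr \<beta>)"
proof (rule injI)
  fix x y assume e: "lmap idx v zl zr \<beta> x = lmap idx v zl zr \<beta> y"
  have d: "lmap idx v zl zr \<beta> (x - y) = 0"
    using e linear_diff[OF lmap_linear[OF idx]] by simp
  have q0: "Qf idx zl zr \<beta> (x - y) = 0" using inner_lmap[OF idx, of "x - y" v zl zr \<beta>] d by simp
  have q1: "Qf idx zl zr \<beta> (lmap idx v zl zr \<beta> (x - y)) = 0" using d by simp
  have "x - y = 0" by (rule kernel_trivial[OF idx pos q0 q1])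
  then show "x = y" by simp
qed

lemma L_bij:
  fixes idx :: "'n::finite \<Rightarrow> nat"
  assumes idx: "bij_betw idx UNIV {1..CARD('n)}"
    and pos: "zl \<ge> 0" "zr \<ge> 0" "\<beta> > 0" "zl + zr > 0"
  shows "bij (lmap idx v zl zr \<beta>)"
  using L_inj[OF idx pos] linear_inj_imp_surj[OF lmap_linear[OF idx]] by (simp add: bij_def)




lemma L_exp:
  fixes idx :: "'n::finite \<Rightarrow> nat"
  assumes idx: "bij_betw idx UNIV {1..CARD('n)}"
    and pos: "zl \<ge> 0" "zr \<ge> 0" "\<beta> > 0" "zl + zr > 0"
  shows "((\<lambda>t. op_exp t (lmap idx v zl zr \<beta>)) \<longlongrightarrow> 0) at_top"
proof -
  define L where "L = lmap idx v zl zr \<beta>"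
  have blL: "bounded_linear L" unfolding L_def by (rule lmap_bounded_linear[OF idx])
  have linL: "linear L" unfolding L_def by (rule lmap_linear[OF idx])
  define B where "B = Blinfun L"
  have BL: "blinfun_apply B = L" unfolding B_def using bounded_linear_Blinfun_apply[OF blL] .
  define A where "A = Aop B"
  have RA: "Rop A = B" unfolding A_def by (simp add: Aop_inverse)
  define E where "E t = Rop (exp (t *\<^sub>R A))" for t
  have opE: "op_exp t L = E t" for t unfolding E_def A_def B_def by (rule op_exp_eq)
  define Q where "Q = Qf idx zl zr \<beta>"
  have Qnn: "Q u \<ge> 0" for u unfolding Q_def using pos by (intro Qf_nonneg) auto
  have QI: "Q u = - inner u (L u)" for u unfolding Q_def L_def using inner_lmap[OF idx, of u v zl zr \<beta>] by simp
  define \<Phi> where "\<Phi> u = Q u + Q (L u)" for u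
  have \<Phi>nn: "\<Phi> u \<ge> 0" for u unfolding \<Phi>_def using Qnn[of u] Qnn[of "L u"] by simp
  have \<Phi>pos: "\<Phi> u > 0" if "u \<noteq> 0" for u
  proof (rule ccontr)
    assume "\<not> \<Phi> u > 0"
    then have "Q u = 0" "Q (L u) = 0" using Qnn[of u] Qnn[of "L u"] unfolding \<Phi>_def by auto
    then have "u = 0" unfolding Q_def L_def by (intro kernel_trivial[OF idx pos]) auto
    with that show False by simp
  qed
  have \<Phi>I: "\<Phi> u = - inner u (B u) - inner (B u) (B (B u))" for u
    unfolding \<Phi>_def QI BL by simp
  have \<Phi>scale: "\<Phi> (r *\<^sub>R u) = r\<^sup>2 * \<Phi> u" for r u
    unfolding \<Phi>I by (simp add: blinfun.scaleR_right power2_eq_square algebra_simps)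
  have cont: "continuous_on (sphere 0 1) \<Phi>"
    unfolding \<Phi>I[abs_def] by (intro continuous_intros)
  have "sphere (0::complex^'n^'n) 1 \<noteq> {}" by simp
  then obtain u0 where u0: "u0 \<in> sphere 0 1" and u0min: "\<And>u. u \<in> sphere 0 1 \<Longrightarrow> \<Phi> u0 \<le> \<Phi> u"
    using continuous_attains_inf[OF compact_sphere _ cont] by blast
  define c where "c = \<Phi> u0"
  have c0: "c > 0" unfolding c_def using u0 by (intro \<Phi>pos) auto
  have \<Phi>low: "\<Phi> u \<ge> c * (norm u)\<^sup>2" for u
  proof (cases "u = 0")
    case True then show ?thesis using \<Phi>nn[of u] by simp
  next
    case False
    define u' where "u' = inverse (norm u) *\<^sub>R u"
    have "u' \<in> sphere 0 1" unfolding u'_def using False by simp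
    then have "c \<le> \<Phi> u'" unfolding c_def by (rule u0min)
    moreover have "u = norm u *\<^sub>R u'" unfolding u'_def using False by simp
    then have "\<Phi> u = (norm u)\<^sup>2 * \<Phi> u'" by (metis \<Phi>scale)
    ultimately show ?thesis by (metis mult.commute mult_right_mono zero_le_power2)
  qed
  define K where "K = norm B"
  have LK: "norm (L u) \<le> K * norm u" for u unfolding K_def BL[symmetric] by (rule norm_blinfun)
  have LK2: "(norm (L u))\<^sup>2 \<le> K\<^sup>2 * (norm u)\<^sup>2" for u
    using LK[of u] by (metis norm_ge_zero power_mono power_mult_distrib)
  define \<kappa> where "\<kappa> = 2 * c / (1 + K\<^sup>2)"
  have \<kappa>0: "\<kappa> > 0" unfolding \<kappa>_def using c0 by (simp add: add_pos_nonneg)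
  have bound: "norm (E t) \<le> sqrt ((1 + K\<^sup>2) * exp (- \<kappa> * t))" if t0: "t \<ge> 0" for t
  proof (rule norm_blinfun_bound)
    show "0 \<le> sqrt ((1 + K\<^sup>2) * exp (- \<kappa> * t))" by simp
    fix x
    define z where "z t = blinfun_apply (E t) x" for t
    have blp: "bounded_linear (\<lambda>y. blinfun_apply (Rop y) x)"
      by (rule bounded_linear_compose[OF blinfun.bounded_linear_left bounded_linear_Rop])
    have dz: "(z has_vector_derivative L (z s)) (at s)" for s
    proof -
      have "((\<lambda>t. blinfun_apply (Rop (exp (t *\<^sub>R A))) x) has_vector_derivative
              blinfun_apply (Rop (A * exp (s *\<^sub>R A))) x) (at s)"
        by (rule bounded_linear.has_vector_derivative[OF blp exp_scaleR_has_vector_derivative_left])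
      moreover have "blinfun_apply (Rop (A * exp (s *\<^sub>R A))) x = L (z s)"
        unfolding z_def E_def Rop_mult RA BL[symmetric] by simp
      ultimately show ?thesis unfolding z_def E_def by simp
    qed
    have dLz: "((\<lambda>s. L (z s)) has_vector_derivative L (L (z s))) (at s)" for s
      by (rule bounded_linear.has_vector_derivative[OF blL dz])
    define W where "W s = inner (z s) (z s) + inner (L (z s)) (L (z s))" for s
    have dW: "(W has_real_derivative (- 2 * \<Phi> (z s))) (at s)" for s
    proof -
      have "(W has_vector_derivative
          ((inner (z s) (L (z s)) + inner (L (z s)) (z s))
          + (inner (L (z s)) (L (L (z s))) + inner (L (L (z s))) (L (z s))))) (at s)"
        unfolding W_def
        by (intro has_vector_derivative_add
            bounded_bilinear.has_vector_derivative[OF bounded_bilinear_inner dz dz]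
            bounded_bilinear.has_vector_derivative[OF bounded_bilinear_inner dLz dLz])
      moreover have "(inner (z s) (L (z s)) + inner (L (z s)) (z s))
          + (inner (L (z s)) (L (L (z s))) + inner (L (L (z s))) (L (z s))) = - 2 * \<Phi> (z s)"
        unfolding \<Phi>_def QI by (simp add: inner_commute)
      ultimately show ?thesis by (simp add: has_real_derivative_iff_has_vector_derivative)
    qed
    have Wle: "W s \<le> (1 + K\<^sup>2) * (norm (z s))\<^sup>2" for s
      using LK2[of "z s"] unfolding W_def power2_norm_eq_inner[symmetric] by (simp add: algebra_simps)
    have Wge: "(norm (z s))\<^sup>2 \<le> W s" for s
      unfolding W_def power2_norm_eq_inner[symmetric] by simp
    define G where "G s = exp (\<kappa> * s) * W s" for s
    have dG: "(G has_real_derivative (exp (\<kappa> * s) * \<kappa> * W s + exp (\<kappa> * s) * (- 2 * \<Phi> (z s)))) (at s)" for s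
      unfolding G_def by (auto intro!: derivative_eq_intros dW)
    have dGn: "exp (\<kappa> * s) * \<kappa> * W s + exp (\<kappa> * s) * (- 2 * \<Phi> (z s)) \<le> 0" for s
    proof -
      have "\<kappa> * W s \<le> \<kappa> * ((1 + K\<^sup>2) * (norm (z s))\<^sup>2)" using Wle[of s] \<kappa>0 by simp
      also have "\<dots> = 2 * c * (norm (z s))\<^sup>2"
      proof -
        have K1: "1 + K\<^sup>2 \<noteq> 0" by (metis add_pos_nonneg zero_le_power2 zero_less_one less_irrefl)
        then show ?thesis unfolding \<kappa>_def by (simp add: field_simps)
      qed
      also have "\<dots> \<le> 2 * \<Phi> (z s)" using \<Phi>low[of "z s"] by simp
      finally have "\<kappa> * W s - 2 * \<Phi> (z s) \<le> 0" by simp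
      then have "exp (\<kappa> * s) * (\<kappa> * W s - 2 * \<Phi> (z s)) \<le> 0" by (simp add: mult_nonneg_nonpos)
      then show ?thesis by (simp add: algebra_simps)
    qed
    have "G t \<le> G 0"
      using DERIV_nonpos_imp_nonincreasing[of 0 t G] t0 dG dGn by blast
    moreover have z0: "z 0 = x" unfolding z_def E_def by (simp add: Rop_one)
    ultimately have "exp (\<kappa> * t) * W t \<le> W 0" unfolding G_def by simp
    then have "W t \<le> exp (- \<kappa> * t) * W 0"
      by (simp add: exp_minus field_simps)
    also have "\<dots> \<le> exp (- \<kappa> * t) * ((1 + K\<^sup>2) * (norm x)\<^sup>2)"
      using Wle[of 0] z0 by (intro mult_left_mono) auto
    finally have "(norm (z t))\<^sup>2 \<le> ((1 + K\<^sup>2) * exp (- \<kappa> * t)) * (norm x)\<^sup>2"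
      using Wge[of t] by (simp add: algebra_simps)
    then have "norm (z t) \<le> sqrt (((1 + K\<^sup>2) * exp (- \<kappa> * t)) * (norm x)\<^sup>2)"
      by (rule real_le_rsqrt)
    then show "norm (blinfun_apply (E t) x) \<le> sqrt ((1 + K\<^sup>2) * exp (- \<kappa> * t)) * norm x"
      unfolding z_def by (simp add: real_sqrt_mult)
  qed
  have lim: "((\<lambda>t. sqrt ((1 + K\<^sup>2) * exp (- \<kappa> * t))) \<longlongrightarrow> 0) at_top"
  proof -
    have "((\<lambda>t. exp (- \<kappa> * t)) \<longlongrightarrow> 0) at_top"
      using \<kappa>0 by (intro filterlim_compose[OF exp_at_bot] filterlim_tendsto_neg_mult_at_bot[OF tendsto_const])
        (auto simp: filterlim_ident)
    then have "((\<lambda>t. sqrt ((1 + K\<^sup>2) * exp (- \<kappa> * t))) \<longlongrightarrow> sqrt ((1 + K\<^sup>2) * 0)) at_top"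
      by (intro tendsto_intros)
    then show ?thesis by simp
  qed
  have "((\<lambda>t. E t) \<longlongrightarrow> 0) at_top"
  proof (rule Lim_null_comparison[OF _ lim])
    show "\<forall>\<^sub>F t in at_top. norm (E t) \<le> sqrt ((1 + K\<^sup>2) * exp (- \<kappa> * t))"
      unfolding eventually_at_top_linorder using bound by blast
  qed
  then show ?thesis unfolding L_def[symmetric] opE .
qed


theorem theorem2p1:
  fixes idx :: "'n::finite \<Rightarrow> nat"
    and v :: "nat \<Rightarrow> real"
    and \<alpha>in_l \<alpha>out_l \<alpha>in_r \<alpha>out_r \<beta> :: real
  assumes N: "CARD('n) \<ge> 2"
    and idx: "bij_betw idx UNIV {1..CARD('n)}"
    and v: "bounded (range v)"
    and nonneg: "\<alpha>in_l \<ge> 0" "\<alpha>out_l \<ge> 0" "\<alpha>in_r \<ge> 0" "\<alpha>out_r \<ge> 0" "\<beta> \<ge> 0"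
    and beta_pos: "\<beta> > 0"
    and zeta_pos: "(\<alpha>in_l + \<alpha>out_l) + (\<alpha>in_r + \<alpha>out_r) > 0"
  shows "(\<forall>c. is_eigenvalue (lmap idx v (\<alpha>in_l + \<alpha>out_l) (\<alpha>in_r + \<alpha>out_r) \<beta>) c \<longrightarrow> Re c < 0)
       \<and> bij (lmap idx v (\<alpha>in_l + \<alpha>out_l) (\<alpha>in_r + \<alpha>out_r) \<beta>)
       \<and> ((\<lambda>t. op_exp t (lmap idx v (\<alpha>in_l + \<alpha>out_l) (\<alpha>in_r + \<alpha>out_r) \<beta>)) \<longlongrightarrow> 0) at_top"
proof -
  have pos: "\<alpha>in_l + \<alpha>out_l \<ge> 0" "\<alpha>in_r + \<alpha>out_r \<ge> 0" "\<beta> > 0"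
      "(\<alpha>in_l + \<alpha>out_l) + (\<alpha>in_r + \<alpha>out_r) > 0"
    using nonneg beta_pos zeta_pos by auto
  show ?thesis
    using eig_neg[OF idx pos] L_bij[OF idx pos] L_exp[OF idx pos] by blast
qed

end
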